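(* Let $n\ge2$ and $j\in\{1,\dots,n+1\}$. Let $X_1,\dots,X_j\in\{0,1\}^n$ be distinct strings such that the vectors $|P(X_1)\rangle_1,\dots,|P(X_j)\rangle_1$ are linearly independent. Then the number of strings $Y\in\{0,1\}^n\setminus\{X_1,\dots,X_j\}$ such that $|P(Y)\rangle_1$ lies in the linear span of $|P(X_1)\rangle_1,\dots,|P(X_j)\rangle_1$ is at most $2^{j-1}-j$.
   Context: For $x\in\{0,1\}^n$, $|P(x)\rangle_1=(1,x_1,\dots,x_n)^T\in\mathbb{R}^{n+1}$. *)

theory Defs
  imports Complex_Main
begin

text \<open>The vector |P(x)>_1 = (1, x_1, ..., x_n) in R^(n+1) is represented as a function
  nat => real with coordinates 0..n (coordinate 0 is the constant 1, coordinate i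
  is x_i for 1 <= i <= n); all coordinates beyond n are 0.\<close>

definition Pvec :: "nat \<Rightarrow> bool list \<Rightarrow> nat \<Rightarrow> real" where
  "Pvec n x i = (if i = 0 then 1 else if i \<le> n then (if x ! (i - 1) then 1 else 0) else 0)"

definition lin_indep :: "nat \<Rightarrow> (nat \<Rightarrow> nat \<Rightarrow> real) \<Rightarrow> nat \<Rightarrow> bool" where
  "lin_indep n v j = (\<forall>c :: nat \<Rightarrow> real.
      (\<forall>i\<le>n. (\<Sum>k<j. c k * v k i) = 0) \<longrightarrow> (\<forall>k<j. c k = 0))"

definition in_lin_span :: "nat \<Rightarrow> (nat \<Rightarrow> real) \<Rightarrow> (nat \<Rightarrow> nat \<Rightarrow> real) \<Rightarrow> nat \<Rightarrow> bool" where
  "in_lin_span n w v j = (\<exists>c :: nat \<Rightarrow> real. \<forall>i\<le>n. w i = (\<Sum>k<j. c k * v k i))"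

end

theory Submission
  imports Defs "HOL-Library.Function_Algebras"
begin

definition sc :: "real \<Rightarrow> (nat \<Rightarrow> real) \<Rightarrow> (nat \<Rightarrow> real)" where
  "sc r f = (\<lambda>i. r * f i)"

interpretation vs: vector_space sc
  by unfold_locales (auto simp: sc_def fun_eq_iff algebra_simps)

lemma sum_fun_apply: "(\<Sum>k\<in>A. f k) (i::nat) = (\<Sum>k\<in>A. f k i :: real)"
  by (induction A rule: infinite_finite_induct) auto

lemma Pvec_nz: "Pvec n Y \<noteq> 0"
proof
  assume "Pvec n Y = 0" then have "Pvec n Y 0 = 0" by simp
  then show False by (simp add: Pvec_def)
qed

lemma finite_P: "finite {Y::bool list. length Y = n \<and> P Y}"
  by (rule finite_subset[OF _ finite_lists_length_eq[of "UNIV::bool set" n]]) auto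

lemma subspace_coord: "vs.subspace {v. v i = a * v k}"
  unfolding vs.subspace_def by (auto simp: sc_def algebra_simps)

lemma smaller_basis:
  assumes "finite B" "vs.independent B" "vs.subspace U" "U \<subseteq> vs.span B"
    "x \<in> vs.span B" "x \<notin> U"
  obtains B0 where "finite B0" "vs.independent B0" "vs.span B0 = U" "card B0 < card B"
proof -
  obtain B0 where B0: "B0 \<subseteq> U" "vs.independent B0" "U \<subseteq> vs.span B0"
    by (rule vs.basis_exists[of U])
  have sp: "vs.span B0 = U" by (rule vs.span_subspace[OF B0(1) B0(3) assms(3)])
  have xn: "x \<notin> vs.span B0" using sp assms(6) by simp
  have ind: "vs.independent (insert x B0)"
    by (rule vs.independent_insertI[OF xn B0(2)])
  have sub: "insert x B0 \<subseteq> vs.span B" using B0(1) assms(4,5) by blast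
  have fc: "finite (insert x B0) \<and> card (insert x B0) \<le> card B"
    by (rule vs.independent_span_bound[OF assms(1) ind sub])
  have "x \<notin> B0" using B0(1) assms(6) by blast
  then have "finite B0" "card B0 < card B" using fc by auto
  then show ?thesis using that B0(2) sp by blast
qed

lemma key:
  "\<forall>B. finite B \<and> vs.independent B \<and> card B = m \<longrightarrow>
     card {Y. length Y = n \<and> Pvec n Y \<in> vs.span B} \<le> 2 ^ (m - 1)"
proof (induction m rule: less_induct)
  case (less m)
  show ?case
  proof (intro allI impI)
    fix B assume B: "finite B \<and> vs.independent B \<and> card B = m"
    define P where "P = {Y. length Y = n \<and> Pvec n Y \<in> vs.span B}"
    have finP: "finite P" unfolding P_def by (rule finite_P)
    show "card P \<le> 2 ^ (m - 1)"
    proof (cases "\<exists>Y0\<in>P. \<exists>Y1\<in>P. \<exists>t<n. \<not> Y0 ! t \<and> Y1 ! t")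
      case False
      have "\<forall>a\<in>P. \<forall>b\<in>P. a = b"
      proof (intro ballI)
        fix a b assume a: "a \<in> P" and b: "b \<in> P"
        have "length a = n" "length b = n" using a b by (auto simp: P_def)
        moreover have "\<forall>t<n. a ! t = b ! t" using False a b by blast
        ultimately show "a = b" by (simp add: list_eq_iff_nth_eq)
      qed
      then have "card P \<le> 1" using card_le_Suc0_iff_eq[OF finP] by simp
      then show ?thesis using one_le_power[of "2::nat"] le_trans by fastforce
    next
      case True
      then obtain Y0 Y1 t where Y0: "Y0 \<in> P" and Y1: "Y1 \<in> P" and t: "t < n"
        and nY0: "\<not> Y0 ! t" and yY1: "Y1 ! t" by blast
      define i where "i = Suc t"
      have Y0i: "Pvec n Y0 i = 0" and Y1i: "Pvec n Y1 i = 1"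
        and Y00: "Pvec n Y0 0 = 1" and Y10: "Pvec n Y1 0 = 1"
        using t nY0 yY1 by (auto simp: Pvec_def i_def)
      define U0 where "U0 = vs.span B \<inter> {v. v i = 0 * v 0}"
      define U1 where "U1 = vs.span B \<inter> {v. v i = 1 * v 0}"
      have sU0: "vs.subspace U0" unfolding U0_def
        by (rule vs.subspace_inter[OF vs.subspace_span subspace_coord])
      have sU1: "vs.subspace U1" unfolding U1_def
        by (rule vs.subspace_inter[OF vs.subspace_span subspace_coord])
      have inB0: "Pvec n Y0 \<in> vs.span B" and inB1: "Pvec n Y1 \<in> vs.span B"
        using Y0 Y1 by (auto simp: P_def)
      obtain B0 where B0: "finite B0" "vs.independent B0" "vs.span B0 = U0" "card B0 < card B"
        using smaller_basis[of B U0 "Pvec n Y1"] B sU0 inB1 Y1i unfolding U0_def by auto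
      obtain B1 where B1: "finite B1" "vs.independent B1" "vs.span B1 = U1" "card B1 < card B"
        using smaller_basis[of B U1 "Pvec n Y0"] B sU1 inB0 Y0i Y00 unfolding U1_def by auto
      define P0 where "P0 = {Y. length Y = n \<and> Pvec n Y \<in> vs.span B0}"
      define P1 where "P1 = {Y. length Y = n \<and> Pvec n Y \<in> vs.span B1}"
      have c0: "card P0 \<le> 2 ^ (card B0 - 1)"
        using less.IH[of "card B0"] B0 B unfolding P0_def by auto
      have c1: "card P1 \<le> 2 ^ (card B1 - 1)"
        using less.IH[of "card B1"] B1 B unfolding P1_def by auto
      have "P \<subseteq> P0 \<union> P1"
      proof
        fix Y assume Y: "Y \<in> P"
        then have L: "length Y = n" by (simp add: P_def)
        show "Y \<in> P0 \<union> P1"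
        proof (cases "Y ! t")
          case True
          then have "Pvec n Y i = 1 * Pvec n Y 0" using t by (simp add: Pvec_def i_def)
          then show ?thesis using Y L B1(3) by (auto simp: P_def P1_def U1_def)
        next
          case False
          then have "Pvec n Y i = 0 * Pvec n Y 0" using t by (simp add: Pvec_def i_def)
          then show ?thesis using Y L B0(3) by (auto simp: P_def P0_def U0_def)
        qed
      qed
      moreover have "finite (P0 \<union> P1)" unfolding P0_def P1_def
        using finite_P[of n "\<lambda>Y. Pvec n Y \<in> vs.span B0"] finite_P[of n "\<lambda>Y. Pvec n Y \<in> vs.span B1"] by blast
      ultimately have "card P \<le> card (P0 \<union> P1)" by (rule card_mono[rotated])
      then have "card P \<le> card P0 + card P1" using card_Un_le[of P0 P1] by linarith
      moreover have "card B0 \<ge> 1"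
      proof -
        have "Pvec n Y0 \<in> vs.span B0" using B0(3) inB0 Y0i by (simp add: U0_def)
        then have "B0 \<noteq> {}" using Pvec_nz by auto
        then show ?thesis using B0(1) by (simp add: Suc_le_eq card_gt_0_iff)
      qed
      moreover have "(2::nat) ^ (card B0 - 1) \<le> 2 ^ (m - 2)"
        using B0(4) B by (intro power_increasing) auto
      moreover have "(2::nat) ^ (card B1 - 1) \<le> 2 ^ (m - 2)"
        using B1(4) B by (intro power_increasing) auto
      moreover have "(2::nat) ^ (m - 2) + 2 ^ (m - 2) = 2 ^ (m - 1)"
      proof -
        have "m - 1 = Suc (m - 2)" using B0(4) B \<open>card B0 \<ge> 1\<close> by auto
        then show ?thesis by simp
      qed
      ultimately show ?thesis using c0 c1 by linarith
    qed
  qed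
qed

lemma Pvec_inj: "length a = n \<Longrightarrow> length b = n \<Longrightarrow> Pvec n a = Pvec n b \<Longrightarrow> a = b"
proof -
  assume a: "length a = n" and b: "length b = n" and e: "Pvec n a = Pvec n b"
  have "\<forall>t<n. a ! t = b ! t"
  proof (intro allI impI)
    fix t assume t: "t < n"
    have "Pvec n a (Suc t) = Pvec n b (Suc t)" using e by simp
    then show "a ! t = b ! t" using t by (auto simp: Pvec_def split: if_splits)
  qed
  then show "a = b" using a b by (intro nth_equalityI) auto
qed

lemma Pvec_out: "n < i \<Longrightarrow> Pvec n Y i = 0"
  by (simp add: Pvec_def)

theorem lemma4:
  fixes n j :: nat and X :: "nat \<Rightarrow> bool list"
  assumes "n \<ge> 2"
    and "1 \<le> j" and "j \<le> n + 1"
    and "\<forall>k<j. length (X k) = n"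
    and "inj_on X {..<j}"
    and "lin_indep n (\<lambda>k. Pvec n (X k)) j"
  shows "card {Y. length Y = n \<and> Y \<notin> X ` {..<j} \<and>
                  in_lin_span n (Pvec n Y) (\<lambda>k. Pvec n (X k)) j}
         \<le> 2 ^ (j - 1) - j"
proof -
  define v where "v = (\<lambda>k. Pvec n (X k))"
  define Bs where "Bs = v ` {..<j}"
  have injv: "inj_on v {..<j}"
  proof (rule inj_onI)
    fix a b assume "a \<in> {..<j}" "b \<in> {..<j}" "v a = v b"
    then have "X a = X b" using assms(4) Pvec_inj[of "X a" n "X b"] unfolding v_def by auto
    then show "a = b" using assms(5) \<open>a \<in> {..<j}\<close> \<open>b \<in> {..<j}\<close> by (auto dest: inj_onD)
  qed
  have finB: "finite Bs" unfolding Bs_def by simp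
  have cardB: "card Bs = j" unfolding Bs_def using card_image[OF injv] by simp
  have reidx: "(\<Sum>b\<in>Bs. sc (u b) b) = (\<Sum>k<j. sc (u (v k)) (v k))" for u
    unfolding Bs_def by (rule sum.reindex[OF injv, unfolded comp_def])
  have li: "\<And>c. (\<forall>i\<le>n. (\<Sum>k<j. c k * v k i) = 0) \<Longrightarrow> (\<forall>k<j. c k = 0)"
    using assms(6) unfolding lin_indep_def v_def by blast
  have indep: "vs.independent Bs"
  proof
    assume "vs.dependent Bs"
    then obtain u where u: "\<exists>b\<in>Bs. u b \<noteq> 0" "(\<Sum>b\<in>Bs. sc (u b) b) = 0"
      using vs.dependent_finite[OF finB] by blast
    have "\<forall>i\<le>n. (\<Sum>k<j. u (v k) * v k i) = 0"
    proof (intro allI impI)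
      fix i
      have "(\<Sum>k<j. sc (u (v k)) (v k)) i = 0" using u(2) reidx by simp
      then show "(\<Sum>k<j. u (v k) * v k i) = 0" by (simp add: sum_fun_apply sc_def)
    qed
    then have "\<forall>k<j. u (v k) = 0" by (rule li)
    then show False using u(1) unfolding Bs_def by blast
  qed
  have span_iff: "in_lin_span n (Pvec n Y) v j \<longleftrightarrow> Pvec n Y \<in> vs.span Bs" for Y
  proof
    assume "in_lin_span n (Pvec n Y) v j"
    then obtain c where c: "\<forall>i\<le>n. Pvec n Y i = (\<Sum>k<j. c k * v k i)"
      unfolding in_lin_span_def by (elim exE)
    define u where "u = (\<lambda>b. c (inv_into {..<j} v b))"
    have "Pvec n Y = (\<Sum>b\<in>Bs. sc (u b) b)"
    proof (rule ext)
      fix i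
      have "(\<Sum>b\<in>Bs. sc (u b) b) = (\<Sum>k<j. sc (c k) (v k))"
        unfolding reidx u_def by (rule sum.cong) (simp_all add: inv_into_f_f[OF injv])
      then have "(\<Sum>b\<in>Bs. sc (u b) b) i = (\<Sum>k<j. c k * v k i)"
        by (simp add: sum_fun_apply sc_def)
      moreover have "Pvec n Y i = (\<Sum>k<j. c k * v k i)"
      proof (cases "i \<le> n")
        case True then show ?thesis using c by simp
      next
        case False then show ?thesis by (simp add: Pvec_out v_def)
      qed
      ultimately show "Pvec n Y i = (\<Sum>b\<in>Bs. sc (u b) b) i" by simp
    qed
    then show "Pvec n Y \<in> vs.span Bs" unfolding vs.span_finite[OF finB] image_iff
      by (intro bexI[of _ u]) auto
  next
    assume "Pvec n Y \<in> vs.span Bs"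
    then obtain u where "Pvec n Y = (\<Sum>b\<in>Bs. sc (u b) b)"
      unfolding vs.span_finite[OF finB] by blast
    then have "\<forall>i\<le>n. Pvec n Y i = (\<Sum>k<j. u (v k) * v k i)"
      unfolding reidx by (simp add: sum_fun_apply sc_def)
    then show "in_lin_span n (Pvec n Y) v j" unfolding in_lin_span_def
      by (intro exI[of _ "\<lambda>k. u (v k)"])
  qed
  define P where "P = {Y. length Y = n \<and> Pvec n Y \<in> vs.span Bs}"
  have cP: "card P \<le> 2 ^ (j - 1)" unfolding P_def
    by (rule key[of j n, rule_format, OF conjI[OF finB conjI[OF indep cardB]]])
  have sub: "X ` {..<j} \<subseteq> P"
  proof
    fix Y assume "Y \<in> X ` {..<j}"
    then obtain k where k: "k < j" "Y = X k" by auto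
    then have "Pvec n Y \<in> Bs" unfolding Bs_def v_def by auto
    then show "Y \<in> P" using k assms(4) vs.span_superset unfolding P_def by auto
  qed
  have cX: "card (X ` {..<j}) = j" using card_image[OF assms(5)] by simp
  have finP: "finite P" unfolding P_def by (rule finite_P)
  have eq: "{Y. length Y = n \<and> Y \<notin> X ` {..<j} \<and>
                  in_lin_span n (Pvec n Y) (\<lambda>k. Pvec n (X k)) j} = P - X ` {..<j}"
  proof -
    have "\<And>Y. in_lin_span n (Pvec n Y) (\<lambda>k. Pvec n (X k)) j \<longleftrightarrow> Pvec n Y \<in> vs.span Bs"
      using span_iff unfolding v_def .
    then show ?thesis unfolding P_def by blast
  qed
  have "card (P - X ` {..<j}) = card P - j"
    using card_Diff_subset[OF finite_subset[OF sub finP] sub] cX by simp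
  then show ?thesis using eq cP by simp
qed

end
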